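(* For every integer $n \geq 2$, $$\left\lceil \frac{3n-1}{4} \right\rceil - 1 \leq \operatorname{adim}(P_2 \square P_n) \leq \left\lceil \frac{3n-1}{4} \right\rceil.$$
   Context: All graphs are finite, simple and undirected. $P_n$ is the path on $n$ vertices and $\square$ is the Cartesian product of graphs: $V(G_1\square G_2)=V(G_1)\times V(G_2)$, and $(u,u')$ is adjacent to $(v,v')$ iff either $u=v$ and $u'v'\in E(G_2)$, or $u'=v'$ and $uv\in E(G_1)$. For a graph $G$, $d(u,v)$ is the shortest-path distance ($\infty$ if $u,v$ lie in different components), and $d_1(u,v)=\min(d(u,v),2)$. A set $A\subseteq V(G)$ is an adjacency resolving set if for all distinct $x,y\in V(G)$ there is $z\in A$ with $d_1(z,x)\neq d_1(z,y)$. The adjacency dimension $\operatorname{adim}(G)$ is the minimum cardinality of an adjacency resolving set. *)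

theory Defs
  imports Main "HOL-Library.Extended_Nat"
begin

definition simple_graph :: "'a set \<Rightarrow> ('a \<Rightarrow> 'a \<Rightarrow> bool) \<Rightarrow> bool" where
  "simple_graph V E \<longleftrightarrow> finite V \<and> (\<forall>u v. E u v \<longrightarrow> u \<in> V \<and> v \<in> V)
     \<and> (\<forall>u v. E u v \<longrightarrow> E v u) \<and> (\<forall>v. \<not> E v v)"

definition walk :: "'a set \<Rightarrow> ('a \<Rightarrow> 'a \<Rightarrow> bool) \<Rightarrow> nat \<Rightarrow> 'a \<Rightarrow> 'a \<Rightarrow> bool" where
  "walk V E k u v \<longleftrightarrow> (\<exists>p :: nat \<Rightarrow> 'a. p 0 = u \<and> p k = v \<and> (\<forall>i\<le>k. p i \<in> V)
       \<and> (\<forall>i<k. E (p i) (p (Suc i))))"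

definition dist :: "'a set \<Rightarrow> ('a \<Rightarrow> 'a \<Rightarrow> bool) \<Rightarrow> 'a \<Rightarrow> 'a \<Rightarrow> enat" where
  "dist V E u v = (if \<exists>k. walk V E k u v then enat (LEAST k. walk V E k u v) else \<infinity>)"

definition dist1 :: "'a set \<Rightarrow> ('a \<Rightarrow> 'a \<Rightarrow> bool) \<Rightarrow> 'a \<Rightarrow> 'a \<Rightarrow> enat" where
  "dist1 V E u v = min (dist V E u v) 2"

definition adj_resolving :: "'a set \<Rightarrow> ('a \<Rightarrow> 'a \<Rightarrow> bool) \<Rightarrow> 'a set \<Rightarrow> bool" where
  "adj_resolving V E A \<longleftrightarrow> A \<subseteq> V \<and>
     (\<forall>x\<in>V. \<forall>y\<in>V. x \<noteq> y \<longrightarrow> (\<exists>z\<in>A. dist1 V E z x \<noteq> dist1 V E z y))"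

definition adim :: "'a set \<Rightarrow> ('a \<Rightarrow> 'a \<Rightarrow> bool) \<Rightarrow> nat" where
  "adim V E = (LEAST k. \<exists>A. adj_resolving V E A \<and> card A = k)"

definition path_V :: "nat \<Rightarrow> nat set" where
  "path_V n = {0..<n}"

definition path_E :: "nat \<Rightarrow> nat \<Rightarrow> nat \<Rightarrow> bool" where
  "path_E n i j \<longleftrightarrow> i < n \<and> j < n \<and> (i = Suc j \<or> j = Suc i)"

definition cart_V :: "'a set \<Rightarrow> 'b set \<Rightarrow> ('a \<times> 'b) set" where
  "cart_V V1 V2 = V1 \<times> V2"

definition cart_E :: "'a set \<Rightarrow> ('a \<Rightarrow> 'a \<Rightarrow> bool) \<Rightarrow> 'b set \<Rightarrow> ('b \<Rightarrow> 'b \<Rightarrow> bool)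
    \<Rightarrow> 'a \<times> 'b \<Rightarrow> 'a \<times> 'b \<Rightarrow> bool" where
  "cart_E V1 E1 V2 E2 x y \<longleftrightarrow> x \<in> V1 \<times> V2 \<and> y \<in> V1 \<times> V2 \<and>
     ((fst x = fst y \<and> E2 (snd x) (snd y)) \<or> (snd x = snd y \<and> E1 (fst x) (fst y)))"

end

theory Submission
  imports Defs
begin


lemma walk0: "walk V E 0 u v \<longleftrightarrow> (u = v \<and> u \<in> V)"
  unfolding walk_def
  by (auto intro!: exI[of _ "\<lambda>_. u"])

lemma walk1:
  assumes cl: "\<And>u v. E u v \<Longrightarrow> u \<in> V \<and> v \<in> V"
  shows "walk V E 1 u v \<longleftrightarrow> E u v"
proof
  assume "walk V E 1 u v"
  then obtain p where "p 0 = u" "p 1 = v" "\<forall>i<1. E (p i) (p (Suc i))"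
    unfolding walk_def by blast
  then show "E u v" by auto
next
  assume e: "E u v"
  show "walk V E 1 u v"
    unfolding walk_def
    apply (rule exI[of _ "\<lambda>i. if i = 0 then u else v"])
    using e cl[OF e] by (auto simp: le_Suc_eq)
qed

lemma dist1_char:
  assumes cl: "\<And>u v. E u v \<Longrightarrow> u \<in> V \<and> v \<in> V" and irr: "\<And>v. \<not> E v v"
    and uV: "u \<in> V"
  shows "dist1 V E u v = (if u = v then 0 else if E u v then 1 else 2)"
proof (cases "u = v")
  case True
  then have w: "walk V E 0 u v" using uV walk0 by metis
  then have "(LEAST k. walk V E k u v) = 0" by (simp add: Least_eq_0)
  then show ?thesis using w True unfolding dist1_def dist_def by (auto simp: zero_enat_def[symmetric])
next
  case False
  note F = False
  show ?thesis
  proof (cases "E u v")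
    case True
    have w: "walk V E 1 u v" using True walk1[OF cl] by blast
    have "(LEAST k. walk V E k u v) = 1"
    proof (rule Least_equality)
      show "walk V E 1 u v" by fact
      fix k assume "walk V E k u v"
      then show "1 \<le> k" using F walk0[of V E u v] by (cases k) auto
    qed
    then show ?thesis using w True F unfolding dist1_def dist_def
      by (auto simp: one_enat_def numeral_eq_enat)
  next
    case False
    show ?thesis
    proof (cases "\<exists>k. walk V E k u v")
      case True
      define L where "L = (LEAST k. walk V E k u v)"
      have wl: "walk V E L u v" unfolding L_def using True by (rule LeastI_ex)
      have "L \<noteq> 0" using wl F walk0 by metis
      moreover have "L \<noteq> 1" using wl False walk1[OF cl] by metis
      ultimately have "L \<ge> 2" by linarith
      then have "min (enat L) 2 = 2"
        by (simp add: min_def numeral_eq_enat)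
      then show ?thesis using True F False unfolding dist1_def dist_def L_def by simp
    next
      case nw: False
      then show ?thesis using F False unfolding dist1_def dist_def by simp
    qed
  qed
qed



abbreviation LV :: "nat \<Rightarrow> (nat \<times> nat) set" where
  "LV n \<equiv> cart_V (path_V 2) (path_V n)"
abbreviation LE :: "nat \<Rightarrow> nat \<times> nat \<Rightarrow> nat \<times> nat \<Rightarrow> bool" where
  "LE n \<equiv> cart_E (path_V 2) (path_E 2) (path_V n) (path_E n)"

lemma LV_eq: "LV n = {0..<2} \<times> {0..<n}"
  by (simp add: cart_V_def path_V_def)

lemma LE_iff: "LE n (a,b) (c,d) \<longleftrightarrow> (a < 2 \<and> b < n \<and> c < 2 \<and> d < n \<and>
   ((a = c \<and> (b = Suc d \<or> d = Suc b)) \<or> (b = d \<and> (a = Suc c \<or> c = Suc a))))"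
  by (auto simp: cart_E_def path_E_def path_V_def)

lemma LE_cl: "LE n u v \<Longrightarrow> u \<in> LV n \<and> v \<in> LV n"
  by (cases u; cases v) (auto simp: LE_iff LV_eq)

lemma LE_irr: "\<not> LE n v v"
  by (cases v) (auto simp: LE_iff)

lemma LE_sym: "LE n u v \<longleftrightarrow> LE n v u"
  by (cases u; cases v) (auto simp: LE_iff)

definition tr :: "nat \<Rightarrow> (nat \<times> nat) set \<Rightarrow> nat \<times> nat \<Rightarrow> (nat \<times> nat) set" where
  "tr n A x = {z \<in> A. LE n z x}"

lemma d1: "u \<in> LV n \<Longrightarrow> dist1 (LV n) (LE n) u v = (if u = v then 0 else if LE n u v then 1 else 2)"
  by (rule dist1_char) (auto simp: LE_cl LE_irr)

lemma res_iff: "adj_resolving (LV n) (LE n) A \<longleftrightarrow>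
   A \<subseteq> LV n \<and> (\<forall>x\<in>LV n - A. \<forall>y\<in>LV n - A. tr n A x = tr n A y \<longrightarrow> x = y)"
proof
  assume r: "adj_resolving (LV n) (LE n) A"
  then have sub: "A \<subseteq> LV n" by (simp add: adj_resolving_def)
  show "A \<subseteq> LV n \<and> (\<forall>x\<in>LV n - A. \<forall>y\<in>LV n - A. tr n A x = tr n A y \<longrightarrow> x = y)"
  proof (intro conjI sub ballI impI)
    fix x y assume x: "x \<in> LV n - A" and y: "y \<in> LV n - A" and t: "tr n A x = tr n A y"
    show "x = y"
    proof (rule ccontr)
      assume "x \<noteq> y"
      then obtain z where z: "z \<in> A" "dist1 (LV n) (LE n) z x \<noteq> dist1 (LV n) (LE n) z y"
        using r x y unfolding adj_resolving_def by blast
      have zV: "z \<in> LV n" using z sub by blast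
      have "z \<noteq> x" "z \<noteq> y" using z x y by auto
      then have "LE n z x \<noteq> LE n z y" using z(2) d1[OF zV] by (auto split: if_splits)
      then show False using t z(1) unfolding tr_def by blast
    qed
  qed
next
  assume h: "A \<subseteq> LV n \<and> (\<forall>x\<in>LV n - A. \<forall>y\<in>LV n - A. tr n A x = tr n A y \<longrightarrow> x = y)"
  show "adj_resolving (LV n) (LE n) A"
    unfolding adj_resolving_def
  proof (intro conjI ballI impI)
    show "A \<subseteq> LV n" using h by blast
    fix x y assume x: "x \<in> LV n" and y: "y \<in> LV n" and ne: "x \<noteq> y"
    show "\<exists>z\<in>A. dist1 (LV n) (LE n) z x \<noteq> dist1 (LV n) (LE n) z y"
    proof (cases "x \<in> A")
      case True
      then show ?thesis using d1[OF x] ne by (intro bexI[of _ x]) auto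
    next
      case xa: False
      show ?thesis
      proof (cases "y \<in> A")
        case True
        then show ?thesis using d1[OF y] ne by (intro bexI[of _ y]) auto
      next
        case False
        then have "tr n A x \<noteq> tr n A y" using h x y xa ne by blast
        then obtain z where z: "z \<in> A" "LE n z x \<noteq> LE n z y" unfolding tr_def by blast
        have zV: "z \<in> LV n" using z h by blast
        have "z \<noteq> x" "z \<noteq> y" using z xa False by auto
        then show ?thesis using z d1[OF zV] by (intro bexI[of _ z]) auto
      qed
    qed
  qed
qed

lemma adim_le: "adj_resolving (LV n) (LE n) A \<Longrightarrow> adim (LV n) (LE n) \<le> card A"
  unfolding adim_def by (rule Least_le) blast

lemma adim_ex: "\<exists>A. adj_resolving (LV n) (LE n) A \<and> card A = adim (LV n) (LE n)"
proof -
  have "adj_resolving (LV n) (LE n) (LV n)" by (simp add: res_iff)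
  then have "\<exists>k A. adj_resolving (LV n) (LE n) A \<and> card A = k" by blast
  then show ?thesis unfolding adim_def by (rule LeastI_ex[where P="\<lambda>k. \<exists>A. adj_resolving (LV n) (LE n) A \<and> card A = k"])
qed



lemma tr_mem:
  assumes sub: "A \<subseteq> LV n" and r: "r < 2" and i: "i < n"
  shows "z \<in> tr n A (r,i) \<longleftrightarrow> z \<in> A \<and> (z = (1-r,i) \<or> (i \<ge> 1 \<and> z = (r,i-1)) \<or> z = (r, i+1))"
proof -
  obtain a b where z: "z = (a,b)" by fastforce
  show ?thesis
  proof
    assume "z \<in> tr n A (r,i)"
    then show "z \<in> A \<and> (z = (1-r,i) \<or> (i \<ge> 1 \<and> z = (r,i-1)) \<or> z = (r, i+1))"
      using r unfolding tr_def z by (auto simp: LE_iff)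
  next
    assume h: "z \<in> A \<and> (z = (1-r,i) \<or> (i \<ge> 1 \<and> z = (r,i-1)) \<or> z = (r, i+1))"
    then have "a < 2" "b < n" using sub z by (auto simp: LV_eq)
    then show "z \<in> tr n A (r,i)"
      using h r i unfolding tr_def z by (auto simp: LE_iff)
  qed
qed

definition Nn :: "(nat \<times> nat) set \<Rightarrow> nat \<Rightarrow> nat \<Rightarrow> bool" where
  "Nn A r i = ((1-r,i) \<in> A \<or> (i \<ge> 1 \<and> (r,i-1) \<in> A) \<or> (r,i+1) \<in> A)"
definition D2n :: "(nat \<times> nat) set \<Rightarrow> nat \<Rightarrow> nat \<Rightarrow> nat \<Rightarrow> bool" where
  "D2n A n r i = (\<not> (i+2 < n \<and> (r,i+2) \<notin> A \<and> (r,i+1) \<in> A \<and> (1-r,i) \<notin> A \<and>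
      \<not> (i \<ge> 1 \<and> (r,i-1) \<in> A) \<and> (1-r,i+2) \<notin> A \<and> (r,i+3) \<notin> A))"
definition Ddn :: "(nat \<times> nat) set \<Rightarrow> nat \<Rightarrow> nat \<Rightarrow> nat \<Rightarrow> bool" where
  "Ddn A n r i = (i+1 < n \<and> (1-r,i+1) \<notin> A \<longrightarrow> (i \<ge> 1 \<and> (r,i-1) \<in> A) \<or> (1-r,i+2) \<in> A)"

lemma low_local:
  assumes sub: "A \<subseteq> LV n"
    and inj: "\<forall>x\<in>LV n - A. \<forall>y\<in>LV n - A. tr n A x = tr n A y \<longrightarrow> x = y"
    and ne: "\<forall>x\<in>LV n - A. tr n A x \<noteq> {}"
    and r: "r < 2" and i: "i < n" and nA: "(r,i) \<notin> A"
  shows "Nn A r i \<and> D2n A n r i \<and> Ddn A n r i"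
proof (intro conjI)
  have xV: "(r,i) \<in> LV n - A" using r i nA by (auto simp: LV_eq)
  have rr1: "1 - (1 - r) = r" using r by arith
  have rr2: "1 - r < 2" by arith
  have rr3: "1 - r \<noteq> r" using r by arith
  note rr = rr1 rr2 rr3
  show "Nn A r i"
  proof -
    obtain z where "z \<in> tr n A (r,i)" using ne xV by blast
    then show ?thesis using tr_mem[OF sub r i] unfolding Nn_def by auto
  qed
  show "D2n A n r i"
    unfolding D2n_def
  proof
    assume h: "i+2 < n \<and> (r,i+2) \<notin> A \<and> (r,i+1) \<in> A \<and> (1-r,i) \<notin> A \<and>
      \<not> (i \<ge> 1 \<and> (r,i-1) \<in> A) \<and> (1-r,i+2) \<notin> A \<and> (r,i+3) \<notin> A"
    have yV: "(r,i+2) \<in> LV n - A" using h r by (auto simp: LV_eq)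
    have "tr n A (r,i) = tr n A (r,i+2)"
    proof (rule set_eqI)
      fix z
      show "z \<in> tr n A (r,i) \<longleftrightarrow> z \<in> tr n A (r,i+2)"
        using tr_mem[OF sub r i, of z] tr_mem[OF sub r, of "i+2" z] h by (auto simp: eval_nat_numeral)
    qed
    then have "(r,i) = (r,i+2)" using inj xV yV by blast
    then show False by simp
  qed
  show "Ddn A n r i"
    unfolding Ddn_def
  proof (rule impI, rule ccontr)
    assume h1: "i+1 < n \<and> (1-r,i+1) \<notin> A"
      and h2: "\<not> ((i \<ge> 1 \<and> (r,i-1) \<in> A) \<or> (1-r,i+2) \<in> A)"
    have yV: "(1-r,i+1) \<in> LV n - A" using h1 r by (auto simp: LV_eq)
    have "tr n A (r,i) = tr n A (1-r,i+1)"
    proof (rule set_eqI)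
      fix z
      show "z \<in> tr n A (r,i) \<longleftrightarrow> z \<in> tr n A (1-r,i+1)"
        using tr_mem[OF sub r i, of z] tr_mem[OF sub rr(2), of "i+1" z] h1 h2 rr by (auto simp: eval_nat_numeral)
    qed
    then have "(r,i) = (1-r,i+1)" using inj xV yV by blast
    then show False by simp
  qed
qed



lemma Nn_tr: "A \<subseteq> LV n \<Longrightarrow> r < 2 \<Longrightarrow> i < n \<Longrightarrow> Nn A r i \<Longrightarrow> tr n A (r,i) \<noteq> {}"
  using tr_mem[of A n r i] unfolding Nn_def by blast

lemma up_core:
  assumes sub: "A \<subseteq> LV n"
    and r1: "r1 < 2" and i1: "i1 < n" and r2: "r2 < 2" and i2: "i2 < n"
    and x: "(r1,i1) \<notin> A" and y: "(r2,i2) \<notin> A" and le: "i1 \<le> i2" and ne: "(r1,i1) \<noteq> (r2,i2)"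
    and D2: "D2n A n r1 i1" and Dd: "Ddn A n r1 i1"
    and z1: "z \<in> tr n A (r1,i1)" and z2: "z \<in> tr n A (r2,i2)"
  shows "tr n A (r1,i1) \<noteq> tr n A (r2,i2)"
proof
  assume eq: "tr n A (r1,i1) = tr n A (r2,i2)"
  have m1: "\<And>w. w \<in> tr n A (r1,i1) \<longleftrightarrow> w \<in> A \<and> (w = (1-r1,i1) \<or> (i1 \<ge> 1 \<and> w = (r1,i1-1)) \<or> w = (r1, i1+1))"
    by (rule tr_mem[OF sub r1 i1])
  have m2: "\<And>w. w \<in> tr n A (r2,i2) \<longleftrightarrow> w \<in> A \<and> (w = (1-r2,i2) \<or> (i2 \<ge> 1 \<and> w = (r2,i2-1)) \<or> w = (r2, i2+1))"
    by (rule tr_mem[OF sub r2 i2])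
  have e: "\<And>w. w \<in> A \<and> (w = (1-r1,i1) \<or> (i1 \<ge> 1 \<and> w = (r1,i1-1)) \<or> w = (r1, i1+1)) \<longleftrightarrow>
               w \<in> A \<and> (w = (1-r2,i2) \<or> (i2 \<ge> 1 \<and> w = (r2,i2-1)) \<or> w = (r2, i2+1))"
  proof -
    fix w
    have "w \<in> tr n A (r1,i1) \<longleftrightarrow> w \<in> tr n A (r2,i2)" using eq by simp
    then show "?thesis w" by (simp only: m1 m2)
  qed
  have zz1: "z \<in> A \<and> (z = (1-r1,i1) \<or> (i1 \<ge> 1 \<and> z = (r1,i1-1)) \<or> z = (r1, i1+1))"
    using z1 by (simp only: m1)
  have zz2: "z \<in> A \<and> (z = (1-r2,i2) \<or> (i2 \<ge> 1 \<and> z = (r2,i2-1)) \<or> z = (r2, i2+1))"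
    using z2 by (simp only: m2)
  note zz = zz1 zz2
  have rc1: "r1 = 0 \<or> r1 = 1" using r1 by arith
  have rc2: "r2 = 0 \<or> r2 = 1" using r2 by arith
  note rc = rc1 rc2
  have rr: "1 - r1 \<noteq> r1" "1 - (1 - r1) = r1" using r1 by arith+
  obtain a b where ab: "z = (a,b)" by fastforce
  have A1: "(a = 1-r1 \<and> b = i1) \<or> (a = r1 \<and> b + 1 = i1) \<or> (a = r1 \<and> b = i1+1)"
    using zz(1) ab by auto
  have A2: "(a = 1-r2 \<and> b = i2) \<or> (a = r2 \<and> b + 1 = i2) \<or> (a = r2 \<and> b = i2+1)"
    using zz(2) ab by auto
  have ne': "r1 \<noteq> r2 \<or> i1 \<noteq> i2" using ne by auto
  have i2c': "(r1 = r2 \<and> i2 = i1 + 2 \<and> a = r1 \<and> b = i1+1) \<or> (r2 = 1 - r1 \<and> i2 = i1 + 1)"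
    using A1 A2 rc le ne' by (elim disjE conjE; simp; arith)
  have i2c: "(r1 = r2 \<and> i2 = i1 + 2 \<and> z = (r1, i1+1)) \<or> (r2 = 1 - r1 \<and> i2 = i1 + 1)"
    using i2c' ab by auto
  then show False
  proof
    assume c: "r1 = r2 \<and> i2 = i1 + 2 \<and> z = (r1, i1+1)"
    have "i1 + 2 < n" "(r1, i1+2) \<notin> A" "(r1, i1+1) \<in> A" using c i2 y zz by auto
    then have "(1-r1,i1) \<in> A \<or> (i1 \<ge> 1 \<and> (r1,i1-1) \<in> A) \<or> (1-r1,i1+2) \<in> A \<or> (r1,i1+3) \<in> A"
      using D2 unfolding D2n_def by blast
    then show False
    proof (elim disjE conjE)
      assume "(1-r1,i1) \<in> A" then show False using e[of "(1-r1,i1)"] c rr by (simp; arith)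
    next
      assume h: "1 \<le> i1" "(r1,i1-1) \<in> A"
      then obtain k where k: "i1 = Suc k" by (cases i1) auto
      show False using h e[of "(r1,i1-1)"] c rr unfolding k by simp
    next
      assume "(1-r1,i1+2) \<in> A" then show False using e[of "(1-r1,i1+2)"] c rr by (simp; arith)
    next
      assume h: "(r1,i1+3) \<in> A"
      have "(r1,i1+3) \<noteq> (r1,i1-1)" "(r1,i1+3) \<noteq> (r1,i1+1)" "(r1,i1+3) \<noteq> (1-r1,i1)"
        using rr by auto
      then show False using h e[of "(r1,i1+3)"] c by (simp add: eval_nat_numeral)
    qed
  next
    assume c: "r2 = 1 - r1 \<and> i2 = i1 + 1"
    have "i1 + 1 < n" "(1-r1, i1+1) \<notin> A" using c i2 y by auto
    then have "(i1 \<ge> 1 \<and> (r1,i1-1) \<in> A) \<or> (1-r1,i1+2) \<in> A"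
      using Dd unfolding Ddn_def by blast
    then show False
    proof (elim disjE conjE)
      assume "1 \<le> i1" "(r1,i1-1) \<in> A" then show False using e[of "(r1,i1-1)"] c rr by (simp; arith)
    next
      assume "(1-r1,i1+2) \<in> A" then show False using e[of "(1-r1,i1+2)"] c rr by (simp; arith)
    qed
  qed
qed

lemma up_local:
  assumes sub: "A \<subseteq> LV n"
    and cond: "\<forall>r<2. \<forall>i<n. (r,i) \<notin> A \<longrightarrow> ((r,i) \<noteq> e \<longrightarrow> Nn A r i) \<and> D2n A n r i \<and> Ddn A n r i"
  shows "adj_resolving (LV n) (LE n) A"
  unfolding res_iff
proof (intro conjI sub ballI impI)
  fix x y assume xV: "x \<in> LV n - A" and yV: "y \<in> LV n - A" and eq: "tr n A x = tr n A y"
  obtain r1 i1 where x: "x = (r1,i1)" by fastforce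
  obtain r2 i2 where y: "y = (r2,i2)" by fastforce
  have b: "r1 < 2" "i1 < n" "r2 < 2" "i2 < n" "(r1,i1) \<notin> A" "(r2,i2) \<notin> A"
    using xV yV x y by (auto simp: LV_eq)
  show "x = y"
  proof (rule ccontr)
    assume ne: "x \<noteq> y"
    show False
    proof (cases "tr n A x = {}")
      case True
      then have "\<not> Nn A r1 i1" "\<not> Nn A r2 i2" using Nn_tr[OF sub] b eq x y by auto
      then have "(r1,i1) = e" "(r2,i2) = e" using cond b by blast+
      then have "x = e" "y = e" using x y by auto
      then show False using ne by simp
    next
      case False
      then obtain z where z1: "z \<in> tr n A x" by blast
      then have z2: "z \<in> tr n A y" using eq by simp
      have c1: "D2n A n r1 i1" "Ddn A n r1 i1" using cond b(1,2,5) by blast+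
      have c2: "D2n A n r2 i2" "Ddn A n r2 i2" using cond b(3,4,6) by blast+
      have ne2: "(r1,i1) \<noteq> (r2,i2)" "(r2,i2) \<noteq> (r1,i1)" using ne x y by auto
      have eq2: "tr n A (r1,i1) = tr n A (r2,i2)" using eq x y by simp
      show False
      proof (cases "i1 \<le> i2")
        case True
        show False using up_core[OF sub b(1-6) True ne2(1) c1 z1[unfolded x] z2[unfolded y]] eq2 by simp
      next
        case False
        then have le: "i2 \<le> i1" by simp
        show False using up_core[OF sub b(3,4,1,2,6,5) le ne2(2) c2 z2[unfolded y] z1[unfolded x]] eq2 by simp
      qed
    qed
  qed
qed



lemma finite_LV: "finite (LV n)" by (simp add: LV_eq)

lemma fix_empty:
  assumes res: "adj_resolving (LV n) (LE n) A"
  shows "\<exists>A'. A' \<subseteq> LV n \<and> card A' \<le> card A + 1 \<and>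
     (\<forall>x\<in>LV n - A'. \<forall>y\<in>LV n - A'. tr n A' x = tr n A' y \<longrightarrow> x = y) \<and>
     (\<forall>x\<in>LV n - A'. tr n A' x \<noteq> {})"
proof -
  have sub: "A \<subseteq> LV n" and inj: "\<forall>x\<in>LV n - A. \<forall>y\<in>LV n - A. tr n A x = tr n A y \<longrightarrow> x = y"
    using res unfolding res_iff by auto
  have finA: "finite A" using sub finite_LV finite_subset by blast
  show ?thesis
  proof (cases "\<exists>b\<in>LV n - A. tr n A b = {}")
    case True
    then obtain b where b: "b \<in> LV n - A" "tr n A b = {}" by blast
    let ?A = "insert b A"
    have trA: "\<And>x. tr n A x = tr n ?A x - {b}" using b unfolding tr_def by auto
    have sub': "?A \<subseteq> LV n" using sub b by auto
    have card: "card ?A \<le> card A + 1" using finA by (simp add: card_insert_if)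
    have inj': "\<forall>x\<in>LV n - ?A. \<forall>y\<in>LV n - ?A. tr n ?A x = tr n ?A y \<longrightarrow> x = y"
    proof (intro ballI impI)
      fix x y assume x: "x \<in> LV n - ?A" and y: "y \<in> LV n - ?A" and e: "tr n ?A x = tr n ?A y"
      have "tr n A x = tr n A y" by (simp only: trA e)
      then show "x = y" using inj x y by blast
    qed
    have ne': "\<forall>x\<in>LV n - ?A. tr n ?A x \<noteq> {}"
    proof (intro ballI notI)
      fix x assume x: "x \<in> LV n - ?A" and e: "tr n ?A x = {}"
      have "tr n A x = {}" by (simp add: trA e)
      then have "tr n A x = tr n A b" using b by simp
      then have "x = b" using inj x b by blast
      then show False using x by simp
    qed
    show ?thesis
      apply (rule exI[of _ "insert b A"])
      using sub' card inj' ne' by blast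
  next
    case False
    have "\<forall>x\<in>LV n - A. tr n A x \<noteq> {}" using False by blast
    then show ?thesis
      apply (intro exI[of _ A])
      using sub inj by simp
  qed
qed

definition bitA :: "nat \<Rightarrow> nat \<Rightarrow> bool" where
  "bitA c r = (c < 4 \<and> (if r = 0 then c mod 2 = 1 else 2 \<le> c))"
definition isreal :: "nat \<Rightarrow> bool" where "isreal c = (c < 4)"
definition stok :: "nat \<Rightarrow> nat \<Rightarrow> bool" where
  "stok x y = (\<not> (x = 5 \<and> y \<noteq> 5) \<and> \<not> (y = 4 \<and> x \<noteq> 4) \<and> \<not> (x = 4 \<and> y = 5))"
definition rowN :: "nat \<Rightarrow> nat \<Rightarrow> nat \<Rightarrow> nat \<Rightarrow> nat \<Rightarrow> bool" where
  "rowN c0 c1 c2 r s = (bitA c1 s \<or> bitA c0 r \<or> bitA c2 r)"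
definition rowD :: "nat \<Rightarrow> nat \<Rightarrow> nat \<Rightarrow> nat \<Rightarrow> nat \<Rightarrow> nat \<Rightarrow> nat \<Rightarrow> bool" where
  "rowD c0 c1 c2 c3 c4 r s =
     ((isreal c3 \<and> \<not> bitA c3 r \<longrightarrow> \<not> (bitA c2 r \<and> \<not> bitA c1 s \<and> \<not> bitA c0 r \<and> \<not> bitA c3 s \<and> \<not> bitA c4 r)) \<and>
      (isreal c2 \<and> \<not> bitA c2 s \<longrightarrow> bitA c0 r \<or> bitA c3 s))"
definition rowok :: "nat \<Rightarrow> nat \<Rightarrow> nat \<Rightarrow> nat \<Rightarrow> nat \<Rightarrow> nat \<Rightarrow> nat \<Rightarrow> bool" where
  "rowok c0 c1 c2 c3 c4 r s = (bitA c1 r \<or> (rowN c0 c1 c2 r s \<and> rowD c0 c1 c2 c3 c4 r s))"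
definition wvalid :: "nat \<Rightarrow> nat \<Rightarrow> nat \<Rightarrow> nat \<Rightarrow> nat \<Rightarrow> bool" where
  "wvalid c0 c1 c2 c3 c4 = (stok c0 c1 \<and> stok c1 c2 \<and> stok c2 c3 \<and> stok c3 c4 \<and>
     (isreal c1 \<longrightarrow> rowok c0 c1 c2 c3 c4 0 1 \<and> rowok c0 c1 c2 c3 c4 1 0))"

definition col :: "nat \<Rightarrow> (nat \<times> nat) set \<Rightarrow> int \<Rightarrow> nat" where
  "col n A k = (if k < 0 then 4 else if k \<ge> int n then 5 else
     (if (0, nat k) \<in> A then 1 else 0) + (if (1, nat k) \<in> A then 2 else 0))"

lemma bitA_col: "r < 2 \<Longrightarrow> bitA (col n A k) r \<longleftrightarrow> (0 \<le> k \<and> k < int n \<and> (r, nat k) \<in> A)"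
proof -
  assume "r < 2"
  then have "r = 0 \<or> r = 1" by arith
  then show ?thesis by (elim disjE) (auto simp: bitA_def col_def)
qed

lemma isreal_col: "isreal (col n A k) \<longleftrightarrow> (0 \<le> k \<and> k < int n)"
  by (auto simp: isreal_def col_def)

lemma bitA_nat:
  assumes sub: "A \<subseteq> LV n" and r: "r < 2"
  shows "bitA (col n A (int j)) r \<longleftrightarrow> (r, j) \<in> A"
  using sub bitA_col[OF r, of n A "int j"] by (auto simp: LV_eq)

lemma bitA_m1:
  assumes sub: "A \<subseteq> LV n" and r: "r < 2"
  shows "bitA (col n A (int i - 1)) r \<longleftrightarrow> (i \<ge> 1 \<and> (r, i-1) \<in> A)"
proof (cases i)
  case 0
  then show ?thesis using bitA_col[OF r, of n A "-1"] by simp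
next
  case (Suc k)
  then have "int i - 1 = int k" by simp
  then show ?thesis using bitA_nat[OF sub r, of k] Suc by simp
qed

lemma bitA_p:
  assumes sub: "A \<subseteq> LV n" and r: "r < 2"
  shows "bitA (col n A (int i + 1)) r \<longleftrightarrow> (r, i+1) \<in> A"
    "bitA (col n A (int i + 2)) r \<longleftrightarrow> (r, i+2) \<in> A"
    "bitA (col n A (int i + 3)) r \<longleftrightarrow> (r, i+3) \<in> A"
proof -
  have "int i + 1 = int (i+1)" "int i + 2 = int (i+2)" "int i + 3 = int (i+3)" by simp_all
  then show "bitA (col n A (int i + 1)) r \<longleftrightarrow> (r, i+1) \<in> A"
    "bitA (col n A (int i + 2)) r \<longleftrightarrow> (r, i+2) \<in> A"
    "bitA (col n A (int i + 3)) r \<longleftrightarrow> (r, i+3) \<in> A"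
    using bitA_nat[OF sub r] by metis+
qed

lemma isreal_p:
  "isreal (col n A (int i + 1)) \<longleftrightarrow> i + 1 < n"
  "isreal (col n A (int i + 2)) \<longleftrightarrow> i + 2 < n"
  unfolding isreal_col by auto

lemma rowN_nat:
  assumes sub: "A \<subseteq> LV n" and r: "r < 2"
  shows "rowN (col n A (int i - 1)) (col n A (int i)) (col n A (int i + 1)) r (1-r) \<longleftrightarrow> Nn A r i"
proof -
  have s: "1 - r < 2" by arith
  show ?thesis unfolding rowN_def Nn_def
    by (simp only: bitA_m1[OF sub r, of i] bitA_nat[OF sub r] bitA_nat[OF sub s] bitA_p[OF sub r])
qed

lemma rowD_nat:
  assumes sub: "A \<subseteq> LV n" and r: "r < 2"
  shows "rowD (col n A (int i - 1)) (col n A (int i)) (col n A (int i + 1)) (col n A (int i + 2))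
           (col n A (int i + 3)) r (1-r) \<longleftrightarrow> D2n A n r i \<and> Ddn A n r i"
proof -
  have s: "1 - r < 2" by arith
  show ?thesis unfolding rowD_def D2n_def Ddn_def
    by (simp only: bitA_m1[OF sub r, of i] bitA_nat[OF sub r] bitA_nat[OF sub s] bitA_p[OF sub r]
       bitA_p[OF sub s] isreal_p) blast
qed



definition cost :: "nat \<Rightarrow> int" where
  "cost c = (if c < 4 then 4 * (int (c mod 2) + int (c div 2)) - 3 else 0)"
definition tab :: "int list list list list" where "tab = [[[[ -8, -4, -4,0,100, -5],[ -4,0,0,4,100, -1],[ -4,0,0,4,100, -1],[0,4,4,8,100,3],[100,100,100,100,100,100],[100,100,100,100,100, -2]],[[ -5, -1, -1,3,100, -2],[ -1,3,3,7,100,2],[ -1,3,3,7,100,2],[3,7,7,11,100,6],[100,100,100,100,100,100],[100,100,100,100,100,1]],[[ -5, -1, -1,3,100, -2],[ -1,3,3,7,100,2],[ -1,3,3,7,100,2],[3,7,7,11,100,6],[100,100,100,100,100,100],[100,100,100,100,100,1]],[[ -2,1,1,4,100,1],[0,4,4,8,100,3],[0,4,4,8,100,3],[4,8,8,12,100,7],[100,100,100,100,100,100],[100,100,100,100,100,2]],[[100,100,100,100,100,100],[100,100,100,100,100,100],[100,100,100,100,100,100],[100,100,100,100,100,100],[100,100,100,100,100,100],[100,100,100,100,100,100]],[[100,100,100,100,100,100],[100,100,100,100,100,100],[100,100,100,100,100,100],[100,100,100,100,100,100],[100,100,100,100,100,100],[100,100,100,100,100,1]]],[[[ -6, -2, -2,2,100,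 -3],[ -4,0,0,4,100, -1],[ -2,2,2,6,100,1],[0,4,4,8,100,3],[100,100,100,100,100,100],[100,100,100,100,100,0]],[[ -4,0,0,4,100, -1],[0,4,4,8,100,3],[0,4,4,8,100,3],[4,8,8,12,100,7],[100,100,100,100,100,100],[100,100,100,100,100,2]],[[ -3,1,1,5,100,0],[0,4,4,8,100,3],[1,5,5,9,100,4],[4,8,8,12,100,7],[100,100,100,100,100,100],[100,100,100,100,100,3]],[[0,4,4,8,100,3],[4,8,8,12,100,7],[4,8,8,12,100,7],[8,12,12,16,100,11],[100,100,100,100,100,100],[100,100,100,100,100,6]],[[100,100,100,100,100,100],[100,100,100,100,100,100],[100,100,100,100,100,100],[100,100,100,100,100,100],[100,100,100,100,100,100],[100,100,100,100,100,100]],[[100,100,100,100,100,100],[100,100,100,100,100,100],[100,100,100,100,100,100],[100,100,100,100,100,100],[100,100,100,100,100,100],[100,100,100,100,100,1]]],[[[ -6, -2, -2,2,100, -3],[ -2,2,2,6,100,1],[ -4,0,0,4,100, -1],[0,4,4,8,100,3],[100,100,100,100,100,100],[100,100,100,100,100,0]],[[ -3,1,1,5,100,0],[1,5,5,9,100,4],[0,4,4,8,100,3],[4,8,8,12,100,7],[100,100,100,100,100,100],[100,100,100,100,100,3]],[[ -4,0,0,4,100, -1],[0,4,4,8,100,3],[0,4,4,8,100,3],[4,8,8,12,100,7],[100,100,100,100,100,100],[100,100,100,100,100,2]],[[0,4,4,8,100,3],[4,8,8,12,100,7],[4,8,8,12,100,7],[8,12,12,16,100,11],[100,100,100,100,100,100],[100,100,100,100,100,6]],[[100,100,100,100,100,100],[100,100,100,100,100,100],[100,100,100,100,100,100],[100,100,100,100,100,100],[100,100,100,100,100,100],[100,100,100,100,100,100]],[[100,100,100,100,100,100],[100,100,100,100,100,100],[100,100,100,100,100,100],[100,100,100,100,100,100],[100,100,100,100,100,100],[100,100,100,100,100,1]]],[[[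 -5, -1, -1,3,100, -2],[ -2,2,2,6,100,1],[ -2,2,2,6,100,1],[1,5,5,9,100,4],[100,100,100,100,100,100],[100,100,100,100,100,1]],[[ -3,1,1,5,100,0],[1,5,5,9,100,4],[1,5,5,9,100,4],[5,9,9,13,100,8],[100,100,100,100,100,100],[100,100,100,100,100,3]],[[ -3,1,1,5,100,0],[1,5,5,9,100,4],[1,5,5,9,100,4],[5,9,9,13,100,8],[100,100,100,100,100,100],[100,100,100,100,100,3]],[[1,5,5,9,100,4],[5,9,9,13,100,8],[5,9,9,13,100,8],[9,13,13,17,100,12],[100,100,100,100,100,100],[100,100,100,100,100,7]],[[100,100,100,100,100,100],[100,100,100,100,100,100],[100,100,100,100,100,100],[100,100,100,100,100,100],[100,100,100,100,100,100],[100,100,100,100,100,100]],[[100,100,100,100,100,100],[100,100,100,100,100,100],[100,100,100,100,100,100],[100,100,100,100,100,100],[100,100,100,100,100,100],[100,100,100,100,100,2]]],[[[ -9, -5, -5, -1,100, -6],[ -5, -1, -1,3,100, -2],[ -5, -1, -1,3,100, -2],[ -1,3,3,7,100,2],[100,100,100,100,100,100],[100,100,100,100,100, -3]],[[ -5, -1, -1,3,100, -2],[ -1,3,3,7,100,2],[ -1,3,3,7,100,2],[3,7,7,11,100,6],[100,100,100,100,100,100],[100,100,100,100,100,1]],[[ -5, -1, -1,3,100, -2],[ -1,3,3,7,100,2],[ -1,3,3,7,100,2],[3,7,7,11,100,6],[100,100,100,100,100,100],[100,100,100,100,100,1]],[[ -1,3,3,7,100,2],[3,7,7,11,100,6],[3,7,7,11,100,6],[7,11,11,15,100,10],[100,100,100,100,100,100],[100,100,100,100,100,5]],[[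 -6, -2, -2,2,100, -3],[ -2,2,2,6,100,1],[ -2,2,2,6,100,1],[2,6,6,10,100,5],[ -3,1,1,5,0,100],[100,100,100,100,100,100]],[[100,100,100,100,100,100],[100,100,100,100,100,100],[100,100,100,100,100,100],[100,100,100,100,100,100],[100,100,100,100,100,100],[100,100,100,100,100,100]]],[[[100,100,100,100,100,100],[100,100,100,100,100,100],[100,100,100,100,100,100],[100,100,100,100,100,100],[100,100,100,100,100,100],[100,100,100,100,100,100]],[[100,100,100,100,100,100],[100,100,100,100,100,100],[100,100,100,100,100,100],[100,100,100,100,100,100],[100,100,100,100,100,100],[100,100,100,100,100,100]],[[100,100,100,100,100,100],[100,100,100,100,100,100],[100,100,100,100,100,100],[100,100,100,100,100,100],[100,100,100,100,100,100],[100,100,100,100,100,100]],[[100,100,100,100,100,100],[100,100,100,100,100,100],[100,100,100,100,100,100],[100,100,100,100,100,100],[100,100,100,100,100,100],[100,100,100,100,100,100]],[[100,100,100,100,100,100],[100,100,100,100,100,100],[100,100,100,100,100,100],[100,100,100,100,100,100],[100,100,100,100,100,100],[100,100,100,100,100,100]],[[100,100,100,100,100,100],[100,100,100,100,100,100],[100,100,100,100,100,100],[100,100,100,100,100,100],[100,100,100,100,100,100],[100,100,100,100,100,1]]]]"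
definition phi :: "nat \<Rightarrow> nat \<Rightarrow> nat \<Rightarrow> nat \<Rightarrow> int" where
  "phi a b c d = tab ! a ! b ! c ! d"
definition check :: bool where
  "check = (\<forall>c0\<in>set [0..<6]. \<forall>c1\<in>set [0..<6]. \<forall>c2\<in>set [0..<6]. \<forall>c3\<in>set [0..<6]. \<forall>c4\<in>set [0..<6].
     wvalid c0 c1 c2 c3 c4 \<longrightarrow> phi c1 c2 c3 c4 \<le> phi c0 c1 c2 c3 + cost c4)"

lemma check_ok: check by code_simp

lemma phi_ends: "phi 4 4 4 4 = 0" "phi 5 5 5 5 = 1"
  by (simp_all add: phi_def tab_def)

lemma pot:
  assumes "c0 < 6" "c1 < 6" "c2 < 6" "c3 < 6" "c4 < 6" "wvalid c0 c1 c2 c3 c4"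
  shows "phi c1 c2 c3 c4 \<le> phi c0 c1 c2 c3 + cost c4"
  using check_ok assms unfolding check_def by auto



lemma col_lt6: "col n A k < 6" by (simp add: col_def)

lemma stok_col: "n \<ge> 1 \<Longrightarrow> stok (col n A k) (col n A (k+1))"
  unfolding stok_def col_def by auto

lemma low_windows:
  assumes sub: "A \<subseteq> LV n" and n1: "n \<ge> 1"
    and loc: "\<forall>r<2. \<forall>i<n. (r,i) \<notin> A \<longrightarrow> Nn A r i \<and> D2n A n r i \<and> Ddn A n r i"
  shows "wvalid (col n A (k-1)) (col n A k) (col n A (k+1)) (col n A (k+2)) (col n A (k+3))"
proof -
  have s1: "stok (col n A (k-1)) (col n A k)" using stok_col[OF n1, of A "k-1"] by simp
  have s2: "stok (col n A k) (col n A (k+1))" using stok_col[OF n1, of A k] by simp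
  have s3: "stok (col n A (k+1)) (col n A (k+2))" using stok_col[OF n1, of A "k+1"] by (simp add: add.assoc)
  have s4: "stok (col n A (k+2)) (col n A (k+3))" using stok_col[OF n1, of A "k+2"] by (simp add: add.assoc)
  have rp: "rowok (col n A (k-1)) (col n A k) (col n A (k+1)) (col n A (k+2)) (col n A (k+3)) 0 1 \<and>
            rowok (col n A (k-1)) (col n A k) (col n A (k+1)) (col n A (k+2)) (col n A (k+3)) 1 0"
    if re: "isreal (col n A k)"
  proof -
    from re have "0 \<le> k" "k < int n" by (simp_all add: isreal_col)
    then obtain i where k: "k = int i" and i: "i < n" by (metis nat_eq_iff nat_less_iff)
    have one: "\<And>r. r < 2 \<Longrightarrow> rowok (col n A (int i - 1)) (col n A (int i)) (col n A (int i + 1))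
         (col n A (int i + 2)) (col n A (int i + 3)) r (1 - r)"
    proof -
      fix r :: nat assume r: "r < 2"
      show "rowok (col n A (int i - 1)) (col n A (int i)) (col n A (int i + 1))
         (col n A (int i + 2)) (col n A (int i + 3)) r (1 - r)"
      proof (cases "(r,i) \<in> A")
        case True
        then show ?thesis unfolding rowok_def using bitA_nat[OF sub r, of i] by simp
      next
        case False
        then have "Nn A r i \<and> D2n A n r i \<and> Ddn A n r i" using loc r i by blast
        then show ?thesis unfolding rowok_def using rowN_nat[OF sub r, of i] rowD_nat[OF sub r, of i] by simp
      qed
    qed
    show ?thesis using one[of 0] one[of 1] unfolding k by simp
  qed
  show ?thesis unfolding wvalid_def using s1 s2 s3 s4 rp by blast
qed

lemma telescope:
  assumes W: "\<And>k. wvalid (col n A (k-1)) (col n A k) (col n A (k+1)) (col n A (k+2)) (col n A (k+3))"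
  shows "phi (col n A (int m - 4)) (col n A (int m - 3)) (col n A (int m - 2)) (col n A (int m - 1))
     \<le> phi (col n A (-4)) (col n A (-3)) (col n A (-2)) (col n A (-1)) + (\<Sum>s<m. cost (col n A (int s)))"
proof (induction m)
  case 0
  then show ?case by simp
next
  case (Suc m)
  have w: "wvalid (col n A (int m - 4)) (col n A (int m - 3)) (col n A (int m - 2)) (col n A (int m - 1)) (col n A (int m))"
    using W[of "int m - 3"] by (simp add: algebra_simps)
  have p: "phi (col n A (int m - 3)) (col n A (int m - 2)) (col n A (int m - 1)) (col n A (int m))
     \<le> phi (col n A (int m - 4)) (col n A (int m - 3)) (col n A (int m - 2)) (col n A (int m - 1)) + cost (col n A (int m))"
    by (rule pot[OF col_lt6 col_lt6 col_lt6 col_lt6 col_lt6 w])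
  have e: "int (Suc m) - 4 = int m - 3" "int (Suc m) - 3 = int m - 2" "int (Suc m) - 2 = int m - 1" "int (Suc m) - 1 = int m"
    by simp_all
  show ?case unfolding e using p Suc.IH by simp
qed

definition g :: "(nat \<times> nat) set \<Rightarrow> nat \<Rightarrow> nat" where
  "g A s = (if (0,s) \<in> A then 1 else 0) + (if (1,s) \<in> A then 1 else 0)"

lemma cost_col: "s < n \<Longrightarrow> cost (col n A (int s)) = 4 * int (g A s) - 3"
  by (auto simp: cost_def col_def g_def)

lemma card_g:
  assumes sub: "A \<subseteq> LV n"
  shows "card A = (\<Sum>s<n. g A s)"
proof -
  have fin: "finite (LV n)" by (simp add: LV_eq)
  have "card A = card (LV n \<inter> A)" using sub by (simp add: Int_absorb1)
  also have "\<dots> = (\<Sum>x\<in>LV n \<inter> A. 1)" by simp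
  also have "\<dots> = (\<Sum>x\<in>LV n. if x \<in> A then 1 else 0)" using fin by (rule sum.inter_restrict)
  also have "\<dots> = (\<Sum>x\<in>{0..<2} \<times> {0..<n}. if x \<in> A then 1 else 0)" by (simp add: LV_eq)
  also have "\<dots> = (\<Sum>r\<in>{0..<2}. \<Sum>s\<in>{0..<n}. if (r,s) \<in> A then 1 else 0)"
    by (rule sum.cartesian_product')
  also have "\<dots> = (\<Sum>s<n. g A s)"
    by (simp add: g_def sum.distrib numeral_2_eq_2 atLeast0LessThan)
  finally show ?thesis .
qed

lemma lower_LD:
  assumes sub: "A \<subseteq> LV n" and n1: "n \<ge> 1"
    and loc: "\<forall>r<2. \<forall>i<n. (r,i) \<notin> A \<longrightarrow> Nn A r i \<and> D2n A n r i \<and> Ddn A n r i"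
  shows "3 * int n + 1 \<le> 4 * int (card A)"
proof -
  have T: "phi (col n A (int (n+4) - 4)) (col n A (int (n+4) - 3)) (col n A (int (n+4) - 2)) (col n A (int (n+4) - 1))
     \<le> phi (col n A (-4)) (col n A (-3)) (col n A (-2)) (col n A (-1)) + (\<Sum>s<n+4. cost (col n A (int s)))"
    by (rule telescope[OF low_windows[OF sub n1 loc]])
  have L: "phi (col n A (int (n+4) - 4)) (col n A (int (n+4) - 3)) (col n A (int (n+4) - 2)) (col n A (int (n+4) - 1)) = 1"
    using phi_ends by (simp add: col_def)
  have R: "phi (col n A (-4)) (col n A (-3)) (col n A (-2)) (col n A (-1)) = 0"
    using phi_ends by (simp add: col_def)
  have Z: "\<And>k. int n \<le> k \<Longrightarrow> cost (col n A k) = 0" by (simp add: col_def cost_def)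
  have S: "(\<Sum>s<n+4. cost (col n A (int s))) = (\<Sum>s<n. cost (col n A (int s)))"
    by (simp add: eval_nat_numeral Z)
  have S2: "(\<Sum>s<n. cost (col n A (int s))) = (\<Sum>s<n. 4 * int (g A s) - 3)"
    by (rule sum.cong) (auto simp: cost_col)
  have S3: "(\<Sum>s<n. 4 * int (g A s) - 3) = 4 * int (\<Sum>s<n. g A s) - 3 * int n"
    by (simp add: sum_subtractf sum_distrib_left)
  show ?thesis using T L R S S2 S3 card_g[OF sub] by simp
qed

lemma lower_bound:
  assumes n1: "n \<ge> 1"
  shows "3 * int n \<le> 4 * int (adim (LV n) (LE n)) + 3"
proof -
  obtain A where res: "adj_resolving (LV n) (LE n) A" and cA: "card A = adim (LV n) (LE n)"
    using adim_ex by blast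
  obtain A' where A': "A' \<subseteq> LV n" "card A' \<le> card A + 1"
     "\<forall>x\<in>LV n - A'. \<forall>y\<in>LV n - A'. tr n A' x = tr n A' y \<longrightarrow> x = y"
     "\<forall>x\<in>LV n - A'. tr n A' x \<noteq> {}"
    using fix_empty[OF res] by blast
  have loc: "\<forall>r<2. \<forall>i<n. (r,i) \<notin> A' \<longrightarrow> Nn A' r i \<and> D2n A' n r i \<and> Ddn A' n r i"
    using low_local[OF A'(1) A'(3) A'(4)] by blast
  have "3 * int n + 1 \<le> 4 * int (card A')" by (rule lower_LD[OF A'(1) n1 loc])
  then show ?thesis using A'(2) cA by linarith
qed



definition base :: "nat list list" where
  "base = [[], [], [2,2], [1,0,1], [1,0,1,1], [3,0,1,0,1], [3,0,1,0,1,1], [1,0,3,0,2,0,2],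
     [1,0,3,0,2,0,2,2], [3,0,1,0,3,0,2,0,2], [3,0,1,0,3,0,2,0,2,2], [1,0,3,0,2,0,3,0,1,0,1],
     [1,0,3,0,2,0,3,0,1,0,1,1]]"

definition Qm :: "nat \<Rightarrow> nat list" where
  "Qm m = (if m = 1 \<or> m = 2 \<or> m = 5 \<or> m = 6 then [3,0,1,0,3,0,2,0] else [1,0,3,0,2,0,3,0])"

function cw :: "nat \<Rightarrow> nat \<Rightarrow> nat" where
  "cw n j = (if n < 13 then base ! n ! j else if j < 8 then Qm (n mod 8) ! j else cw (n - 8) (j - 8))"
  by auto
termination by (relation "measure fst") auto

declare cw.simps[simp del]

definition cwi :: "nat \<Rightarrow> int \<Rightarrow> nat" where
  "cwi n k = (if k < 0 then 4 else if k \<ge> int n then 5 else cw n (nat k))"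

definition exr :: "nat \<Rightarrow> nat" where
  "exr n = (if n mod 8 = 3 \<or> n mod 8 = 4 \<or> n mod 8 = 5 \<or> n mod 8 = 6 then 1 else 0)"
definition exc :: "nat \<Rightarrow> nat" where
  "exc n = (if odd n then n - 2 else n - 3)"

definition upok :: "nat \<Rightarrow> nat \<Rightarrow> nat \<Rightarrow> nat \<Rightarrow> nat \<Rightarrow> bool \<Rightarrow> bool \<Rightarrow> bool" where
  "upok c0 c1 c2 c3 c4 e0 e1 =
    ((bitA c1 0 \<or> ((e0 \<or> rowN c0 c1 c2 0 1) \<and> rowD c0 c1 c2 c3 c4 0 1)) \<and>
     (bitA c1 1 \<or> ((e1 \<or> rowN c0 c1 c2 1 0) \<and> rowD c0 c1 c2 c3 c4 1 0)))"

definition U :: "nat \<Rightarrow> nat \<Rightarrow> bool" where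
  "U n j = upok (cwi n (int j - 1)) (cwi n (int j)) (cwi n (int j + 1)) (cwi n (int j + 2)) (cwi n (int j + 3))
     (exr n = 0 \<and> exc n = j) (exr n = 1 \<and> exc n = j)"

definition Qext :: "nat \<Rightarrow> int \<Rightarrow> nat" where
  "Qext m k = (if k < 0 then 4 else Qm m ! (nat k mod 8))"

definition popc :: "nat \<Rightarrow> nat" where
  "popc c = (if bitA c 0 then 1 else 0) + (if bitA c 1 then 1 else 0)"

definition C1 :: bool where "C1 = (\<forall>n\<in>set [2..<13]. \<forall>j\<in>set [0..<n]. U n j)"
definition C2 :: bool where "C2 = (\<forall>m\<in>set [0..<8]. \<forall>j\<in>set [0..<8].
   upok (Qext m (int j - 1)) (Qext m (int j)) (Qext m (int j + 1)) (Qext m (int j + 2)) (Qext m (int j + 3)) False False)"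
definition C3 :: bool where "C3 = (\<forall>n\<in>set [2..<13]. (\<Sum>j\<leftarrow>[0..<n]. popc (cw n j)) = (3 * n + 2) div 4)"
definition C4 :: bool where "C4 = (\<forall>m\<in>set [0..<8]. (\<Sum>j\<leftarrow>[0..<8]. popc (Qm m ! j)) = 6)"
definition C5 :: bool where "C5 = (\<forall>n\<in>set [5..<13]. \<forall>k\<in>set [0..<3]. cw n k = Qm (n mod 8) ! k)"
definition C6 :: bool where "C6 = (\<forall>n\<in>set [2..<13]. \<forall>j\<in>set [0..<n]. cw n j < 4)"
definition C7 :: bool where "C7 = (\<forall>m\<in>set [0..<8]. \<forall>j\<in>set [0..<8]. Qm m ! j < 4)"

lemma C1_ok: C1 by code_simp
lemma C2_ok: C2 by code_simp
lemma C3_ok: C3 by code_simp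
lemma C4_ok: C4 by code_simp
lemma C5_ok: C5 by code_simp
lemma C6_ok: C6 by code_simp
lemma C7_ok: C7 by code_simp



lemma cw_a: "n < 13 \<Longrightarrow> cw n j = base ! n ! j" by (subst cw.simps) simp
lemma cw_b: "\<not> n < 13 \<Longrightarrow> j < 8 \<Longrightarrow> cw n j = Qm (n mod 8) ! j" by (subst cw.simps) simp
lemma cw_c: "\<not> n < 13 \<Longrightarrow> \<not> j < 8 \<Longrightarrow> cw n j = cw (n - 8) (j - 8)" by (subst cw.simps) simp

lemma C1': "2 \<le> n \<Longrightarrow> n < 13 \<Longrightarrow> j < n \<Longrightarrow> U n j"
proof -
  assume a: "2 \<le> n" "n < 13" "j < n"
  have "n \<in> set [2..<13]" "j \<in> set [0..<n]" by (simp_all only: set_upt atLeastLessThan_iff) (use a in simp)+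
  then show ?thesis using C1_ok unfolding C1_def by blast
qed

lemma C2': "m < 8 \<Longrightarrow> j < 8 \<Longrightarrow>
   upok (Qext m (int j - 1)) (Qext m (int j)) (Qext m (int j + 1)) (Qext m (int j + 2)) (Qext m (int j + 3)) False False"
proof -
  assume a: "m < 8" "j < 8"
  have "m \<in> set [0..<8]" "j \<in> set [0..<8]" by (simp_all only: set_upt atLeastLessThan_iff) (use a in simp)+
  then show ?thesis using C2_ok unfolding C2_def by blast
qed

lemma C3': "2 \<le> n \<Longrightarrow> n < 13 \<Longrightarrow> (\<Sum>j\<leftarrow>[0..<n]. popc (cw n j)) = (3 * n + 2) div 4"
proof -
  assume a: "2 \<le> n" "n < 13"
  have "n \<in> set [2..<13]" by (simp_all only: set_upt atLeastLessThan_iff) (use a in simp)+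
  then show ?thesis using C3_ok unfolding C3_def by blast
qed

lemma C4': "m < 8 \<Longrightarrow> (\<Sum>j\<leftarrow>[0..<8]. popc (Qm m ! j)) = 6"
proof -
  assume a: "m < 8"
  have "m \<in> set [0..<8]" by (simp_all only: set_upt atLeastLessThan_iff) (use a in simp)+
  then show ?thesis using C4_ok unfolding C4_def by blast
qed

lemma C5'': "5 \<le> n \<Longrightarrow> n < 13 \<Longrightarrow> k < 3 \<Longrightarrow> cw n k = Qm (n mod 8) ! k"
proof -
  assume a: "5 \<le> n" "n < 13" "k < 3"
  have "n \<in> set [5..<13]" "k \<in> set [0..<3]" by (simp_all only: set_upt atLeastLessThan_iff) (use a in simp)+
  then show ?thesis using C5_ok unfolding C5_def by blast
qed

lemma C6': "2 \<le> n \<Longrightarrow> n < 13 \<Longrightarrow> j < n \<Longrightarrow> cw n j < 4"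
proof -
  assume a: "2 \<le> n" "n < 13" "j < n"
  have "n \<in> set [2..<13]" "j \<in> set [0..<n]" by (simp_all only: set_upt atLeastLessThan_iff) (use a in simp)+
  then show ?thesis using C6_ok unfolding C6_def by blast
qed

lemma C7': "m < 8 \<Longrightarrow> j < 8 \<Longrightarrow> Qm m ! j < 4"
proof -
  assume a: "m < 8" "j < 8"
  have "m \<in> set [0..<8]" "j \<in> set [0..<8]" by (simp_all only: set_upt atLeastLessThan_iff) (use a in simp)+
  then show ?thesis using C7_ok unfolding C7_def by blast
qed

lemma C5': "5 \<le> n \<Longrightarrow> k < 3 \<Longrightarrow> cw n k = Qm (n mod 8) ! k"
proof (cases "n < 13")
  case True
  assume "5 \<le> n" "k < 3"
  then show ?thesis using C5'' True by blast
next
  case False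
  assume "5 \<le> n" "k < 3"
  then show ?thesis using False by (simp add: cw_b)
qed

lemma cw_lt4: "2 \<le> n \<Longrightarrow> j < n \<Longrightarrow> cw n j < 4"
proof (induction n arbitrary: j rule: less_induct)
  case (less n)
  show ?case
  proof (cases "n < 13")
    case True
    then show ?thesis using C6' less.prems by blast
  next
    case False
    show ?thesis
    proof (cases "j < 8")
      case True
      have "n mod 8 < 8" by simp
      then show ?thesis using C7'[of "n mod 8" j] True False by (simp add: cw_b)
    next
      case j8: False
      have "cw (n-8) (j-8) < 4" using less.IH[of "n-8" "j-8"] False j8 less.prems by auto
      then show ?thesis using False j8 by (simp add: cw_c)
    qed
  qed
qed

lemma cwi_Qext:
  assumes n: "13 \<le> n" and k1: "-1 \<le> k" and k2: "k \<le> 10"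
  shows "cwi n k = Qext (n mod 8) k"
proof (cases "k < 0")
  case True
  then show ?thesis by (simp add: cwi_def Qext_def)
next
  case False
  then obtain i where i: "k = int i" by (metis nonneg_int_cases not_less)
  have i10: "i \<le> 10" using k2 i by simp
  have "cw n i = Qm (n mod 8) ! (i mod 8)"
  proof (cases "i < 8")
    case True
    then show ?thesis using n by (simp add: cw_b)
  next
    case False
    then have "cw n i = cw (n-8) (i-8)" using n by (simp add: cw_c)
    also have "\<dots> = Qm ((n-8) mod 8) ! (i-8)" using C5'[of "n-8" "i-8"] n i10 by simp
    also have "(n-8) mod 8 = n mod 8" using n by (simp add: le_mod_geq)
    also have "i - 8 = i mod 8" using False i10 by (simp add: le_mod_geq)
    finally show ?thesis .
  qed
  then show ?thesis using n i i10 by (simp add: cwi_def Qext_def)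
qed

lemma cwi_shift:
  assumes n: "13 \<le> n" and k: "8 \<le> k"
  shows "cwi n k = cwi (n-8) (k-8)"
proof -
  define i where "i = nat k"
  have ki: "k = int i" using k unfolding i_def by simp
  have i8: "8 \<le> i" using k ki by simp
  have k8: "k - 8 = int (i - 8)" using ki i8 by simp
  have nn: "int (n - 8) = int n - 8" using n by simp
  show ?thesis
  proof (cases "int n \<le> k")
    case True
    then have "int (n-8) \<le> k - 8" using nn by simp
    then show ?thesis using True k unfolding cwi_def by simp
  next
    case False
    then have F2: "\<not> int (n-8) \<le> k - 8" using nn by simp
    have "cw n i = cw (n-8) (i-8)" using n i8 by (simp add: cw_c)
    moreover have "nat (k - 8) = i - 8" using k8 by simp
    ultimately show ?thesis using False F2 k unfolding cwi_def i_def by simp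
  qed
qed

lemma upok_cong0:
  assumes "bitA c0 0 = bitA d0 0" "bitA c0 1 = bitA d0 1"
  shows "upok c0 c1 c2 c3 c4 e0 e1 = upok d0 c1 c2 c3 c4 e0 e1"
  using assms by (simp add: upok_def rowN_def rowD_def)

lemma U_all: "2 \<le> n \<Longrightarrow> j < n \<Longrightarrow> U n j"
proof (induction n arbitrary: j rule: less_induct)
  case (less n)
  show ?case
  proof (cases "n < 13")
    case True
    then show ?thesis using C1' less.prems by blast
  next
    case False
    then have n13: "13 \<le> n" by simp
    have exc: "exc n \<ge> 10" using n13 unfolding exc_def by auto
    show ?thesis
    proof (cases "j < 8")
      case True
      have e: "cwi n (int j - 1) = Qext (n mod 8) (int j - 1)" "cwi n (int j) = Qext (n mod 8) (int j)"
        "cwi n (int j + 1) = Qext (n mod 8) (int j + 1)" "cwi n (int j + 2) = Qext (n mod 8) (int j + 2)"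
        "cwi n (int j + 3) = Qext (n mod 8) (int j + 3)"
        using True by (auto intro!: cwi_Qext[OF n13])
      have m: "n mod 8 < 8" by simp
      have "upok (Qext (n mod 8) (int j - 1)) (Qext (n mod 8) (int j)) (Qext (n mod 8) (int j + 1))
          (Qext (n mod 8) (int j + 2)) (Qext (n mod 8) (int j + 3)) False False"
        using C2'[OF m True] .
      moreover have "exc n \<noteq> j" using exc True by simp
      ultimately show ?thesis unfolding U_def e by simp
    next
      case j8: False
      have IH: "U (n-8) (j-8)" using less.IH[of "n-8" "j-8"] n13 j8 less.prems by auto
      have e: "cwi n (int j) = cwi (n-8) (int (j-8))"
        "cwi n (int j + 1) = cwi (n-8) (int (j-8) + 1)"
        "cwi n (int j + 2) = cwi (n-8) (int (j-8) + 2)"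
        "cwi n (int j + 3) = cwi (n-8) (int (j-8) + 3)"
        using cwi_shift[OF n13] j8 by (auto simp: of_nat_diff algebra_simps)
      have b: "bitA (cwi n (int j - 1)) r = bitA (cwi (n-8) (int (j-8) - 1)) r" if r: "r < 2" for r
      proof (cases "j = 8")
        case True
        have "cwi n 7 = Qext (n mod 8) 7" using cwi_Qext[OF n13] by simp
        moreover have "Qext m 7 = 0" for m by (simp add: Qext_def Qm_def)
        ultimately show ?thesis using True by (simp add: cwi_def bitA_def)
      next
        case False
        then show ?thesis using cwi_shift[OF n13, of "int j - 1"] j8 by (simp add: of_nat_diff algebra_simps)
      qed
      have ex1: "exr n = exr (n-8)" using n13 unfolding exr_def by (simp add: le_mod_geq)
      have ex2: "(exc n = j) = (exc (n-8) = j - 8)" using n13 j8 unfolding exc_def by auto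
      show ?thesis using IH unfolding U_def e ex1 ex2
        using upok_cong0[OF b[of 0] b[of 1]] by simp
    qed
  qed
qed



definition AU :: "nat \<Rightarrow> (nat \<times> nat) set" where
  "AU n = {(r,j). r < 2 \<and> j < n \<and> bitA (cw n j) r}"

lemma AU_sub: "AU n \<subseteq> LV n" by (auto simp: AU_def LV_eq)

lemma recomp: "c < 4 \<Longrightarrow> (if bitA c 0 then 1 else 0) + (if bitA c 1 then 2 else 0) = c"
proof -
  assume "c < 4"
  then have "c = 0 \<or> c = 1 \<or> c = 2 \<or> c = 3" by arith
  then show ?thesis by (elim disjE) (simp_all add: bitA_def)
qed

lemma col_AU:
  assumes n: "2 \<le> n"
  shows "col n (AU n) k = cwi n k"
proof (cases "k < 0 \<or> int n \<le> k")
  case True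
  then show ?thesis by (auto simp: col_def cwi_def)
next
  case False
  define j where "j = nat k"
  have kj: "k = int j" "j < n" using False unfolding j_def by auto
  have c4: "cw n j < 4" using cw_lt4[OF n kj(2)] .
  have m: "(0, j) \<in> AU n \<longleftrightarrow> bitA (cw n j) 0" "(1, j) \<in> AU n \<longleftrightarrow> bitA (cw n j) 1"
    using kj(2) by (auto simp: AU_def)
  show ?thesis using False recomp[OF c4] unfolding col_def cwi_def j_def[symmetric] m by simp
qed

lemma AU_res:
  assumes n: "2 \<le> n"
  shows "adj_resolving (LV n) (LE n) (AU n)"
proof (rule up_local[OF AU_sub, where e = "(exr n, exc n)"], intro allI impI)
  fix r i assume r: "r < 2" and i: "i < n" and nA: "(r,i) \<notin> AU n"
  have u: "U n i" by (rule U_all[OF n i])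
  let ?c0 = "col n (AU n) (int i - 1)" and ?c1 = "col n (AU n) (int i)" and ?c2 = "col n (AU n) (int i + 1)"
    and ?c3 = "col n (AU n) (int i + 2)" and ?c4 = "col n (AU n) (int i + 3)"
  have u': "upok ?c0 ?c1 ?c2 ?c3 ?c4 (exr n = 0 \<and> exc n = i) (exr n = 1 \<and> exc n = i)"
    using u unfolding U_def col_AU[OF n] .
  have r0: "(0::nat) < 2" and r1: "(1::nat) < 2" by simp_all
  have N0: "rowN ?c0 ?c1 ?c2 0 1 \<longleftrightarrow> Nn (AU n) 0 i" using rowN_nat[OF AU_sub[of n] r0, of i] by simp
  have N1: "rowN ?c0 ?c1 ?c2 1 0 \<longleftrightarrow> Nn (AU n) 1 i" using rowN_nat[OF AU_sub[of n] r1, of i] by simp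
  have D0: "rowD ?c0 ?c1 ?c2 ?c3 ?c4 0 1 \<longleftrightarrow> D2n (AU n) n 0 i \<and> Ddn (AU n) n 0 i"
    using rowD_nat[OF AU_sub[of n] r0, of i] by simp
  have D1: "rowD ?c0 ?c1 ?c2 ?c3 ?c4 1 0 \<longleftrightarrow> D2n (AU n) n 1 i \<and> Ddn (AU n) n 1 i"
    using rowD_nat[OF AU_sub[of n] r1, of i] by simp
  have B0: "bitA ?c1 0 \<longleftrightarrow> (0,i) \<in> AU n" using bitA_nat[OF AU_sub[of n] r0] .
  have B1: "bitA ?c1 1 \<longleftrightarrow> (1,i) \<in> AU n" using bitA_nat[OF AU_sub[of n] r1] .
  have rc: "r = 0 \<or> r = 1" using r by arith
  show "((r, i) \<noteq> (exr n, exc n) \<longrightarrow> Nn (AU n) r i) \<and> D2n (AU n) n r i \<and> Ddn (AU n) n r i"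
    using rc
  proof
    assume r0': "r = 0"
    then show ?thesis using u' nA unfolding upok_def N0 D0 B0 by auto
  next
    assume r1': "r = 1"
    then show ?thesis using u' nA unfolding upok_def N1 D1 B1 by auto
  qed
qed

lemma split8: "(\<Sum>j<8+m. f j) = (\<Sum>j<8. f j) + (\<Sum>j<m. f (j+8 :: nat))"
proof (induction m)
  case 0
  then show ?case by simp
next
  case (Suc m)
  have "(\<Sum>j<8 + Suc m. f j) = (\<Sum>j<8+m. f j) + f (8+m)" by (simp only: add_Suc_right sum.lessThan_Suc)
  also have "\<dots> = (\<Sum>j<8. f j) + ((\<Sum>j<m. f (j+8)) + f (m+8))" using Suc.IH by (simp add: add_ac)
  also have "(\<Sum>j<m. f (j+8)) + f (m+8) = (\<Sum>j<Suc m. f (j+8))" by simp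
  finally show ?case .
qed

lemma lsum: "(\<Sum>j\<leftarrow>[0..<n]. f j) = (\<Sum>j<n. f j)"
  by (simp add: interv_sum_list_conv_sum_set_nat atLeast0LessThan)

lemma sum_popc: "2 \<le> n \<Longrightarrow> (\<Sum>j<n. popc (cw n j)) = (3 * n + 2) div 4"
proof (induction n rule: less_induct)
  case (less n)
  show ?case
  proof (cases "n < 13")
    case True
    show ?thesis using C3'[OF less.prems True] unfolding lsum by simp
  next
    case False
    define m where "m = n - 8"
    have nm: "n = 8 + m" using False unfolding m_def by simp
    have "(\<Sum>j<n. popc (cw n j)) = (\<Sum>j<8. popc (cw n j)) + (\<Sum>j<m. popc (cw n (j+8)))"
      unfolding nm by (rule split8)
    also have "(\<Sum>j<8. popc (cw n j)) = (\<Sum>j<8. popc (Qm (n mod 8) ! j))"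
      using False by (intro sum.cong) (auto simp: cw_b)
    also have "\<dots> = 6" using C4'[of "n mod 8"] unfolding lsum by simp
    also have "(\<Sum>j<m. popc (cw n (j+8))) = (\<Sum>j<m. popc (cw m j))"
      using False by (intro sum.cong) (auto simp: cw_c m_def)
    also have "\<dots> = (3 * m + 2) div 4" using less.IH[of m] False unfolding m_def by simp
    finally show ?thesis unfolding nm by simp
  qed
qed

lemma card_AU: "2 \<le> n \<Longrightarrow> card (AU n) = (3 * n + 2) div 4"
proof -
  assume n: "2 \<le> n"
  have "card (AU n) = (\<Sum>s<n. g (AU n) s)" by (rule card_g[OF AU_sub])
  also have "\<dots> = (\<Sum>s<n. popc (cw n s))"
    by (intro sum.cong) (auto simp: g_def popc_def AU_def)
  also have "\<dots> = (3 * n + 2) div 4" by (rule sum_popc[OF n])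
  finally show ?thesis .
qed

lemma upper_bound: "2 \<le> n \<Longrightarrow> adim (LV n) (LE n) \<le> (3 * n + 2) div 4"
  using adim_le[OF AU_res] card_AU by metis

lemma ceil_eq: "\<lceil>(3 * real n - 1) / 4\<rceil> = int ((3 * n + 2) div 4)"
proof (rule ceiling_unique)
  define q where "q = (3 * n + 2) div 4"
  have h1: "4 * q \<le> 3 * n + 2" unfolding q_def by simp
  have h2: "3 * n + 2 < 4 * q + 4" unfolding q_def by simp
  have h3: "3 * n \<le> 4 * q + 1" using h2 by simp
  have "real (4 * q) \<le> real (3 * n + 2)" using h1 by (simp only: of_nat_le_iff)
  then have r1: "4 * real q \<le> 3 * real n + 2" by simp
  have "real (3 * n) \<le> real (4 * q + 1)" using h3 by (simp only: of_nat_le_iff)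
  then have r3: "3 * real n \<le> 4 * real q + 1" by simp
  show "real_of_int (int q) - 1 < (3 * real n - 1) / 4" using r1 by simp
  show "(3 * real n - 1) / 4 \<le> real_of_int (int q)" using r3 by simp
qed


theorem theorem1p11:
  fixes n :: nat
  assumes "n \<ge> 2"
  shows "\<lceil>(3 * real n - 1) / 4\<rceil> - 1
           \<le> int (adim (cart_V (path_V 2) (path_V n)) (cart_E (path_V 2) (path_E 2) (path_V n) (path_E n)))
       \<and> int (adim (cart_V (path_V 2) (path_V n)) (cart_E (path_V 2) (path_E 2) (path_V n) (path_E n)))
           \<le> \<lceil>(3 * real n - 1) / 4\<rceil>"
proof -
  have n1: "n \<ge> 1" using assms by simp
  have lo: "3 * int n \<le> 4 * int (adim (LV n) (LE n)) + 3" by (rule lower_bound[OF n1])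
  have up: "adim (LV n) (LE n) \<le> (3 * n + 2) div 4" by (rule upper_bound[OF assms])
  have lo': "3 * n \<le> 4 * adim (LV n) (LE n) + 3" using lo by linarith
  have lo2: "(3 * n + 2) div 4 \<le> adim (LV n) (LE n) + 1" using lo' by presburger
  show ?thesis unfolding ceil_eq using up lo2 by linarith
qed

end
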